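(* Let $(X,Y)$ be a pair of uncorrelated real random variables. If $X\in\mathcal{G}(\nu)$ and $|Y|\le\kappa$ almost surely for some $\nu>0$ and $\kappa>0$, then $XY\in\mathcal{G}((9/2)\kappa^2\nu)$.
   Context: A centered random variable $Y$ is sub-Gaussian with variance factor $\tau^2$, written $Y\in\mathcal{G}(\tau^2)$, if $\log\mathbb{E}[\exp(\lambda Y)]\le\lambda^2\tau^2/2$ for all $\lambda\in\mathbb{R}$ (in particular membership in $\mathcal{G}(\cdot)$ requires the variable to be centered). *)

theory Defs
  imports "HOL-Probability.Probability"
begin

definition subgaussian :: "'a measure \<Rightarrow> ('a \<Rightarrow> real) \<Rightarrow> real \<Rightarrow> bool" where
  "subgaussian M Y tau2 \<longleftrightarrow>
     Y \<in> borel_measurable M \<and> integrable M Y \<and> (\<integral>x. Y x \<partial>M) = 0 \<and>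
     (\<forall>l::real. integrable M (\<lambda>x. exp (l * Y x)) \<and>
        ln (\<integral>x. exp (l * Y x) \<partial>M) \<le> l\<^sup>2 * tau2 / 2)"

definition uncorrelated :: "'a measure \<Rightarrow> ('a \<Rightarrow> real) \<Rightarrow> ('a \<Rightarrow> real) \<Rightarrow> bool" where
  "uncorrelated M X Y \<longleftrightarrow>
     integrable M X \<and> integrable M Y \<and> integrable M (\<lambda>x. X x * Y x) \<and>
     (\<integral>x. X x * Y x \<partial>M) = (\<integral>x. X x \<partial>M) * (\<integral>x. Y x \<partial>M)"

end

theory Submission imports Defs begin

lemma exp_taylor2: fixes z :: real shows "exp z \<le> 1 + z + z\<^sup>2 / 2 * exp \<bar>z\<bar>"
proof -
  obtain t where t: "\<bar>t\<bar> \<le> \<bar>z\<bar>" "exp z = (\<Sum>m<2. (z ^ m) / fact m) + (exp t / fact 2) * z ^ 2"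
    using Maclaurin_exp_le[of z 2] by blast
  have e: "exp t \<le> exp \<bar>z\<bar>" using t(1) by simp
  have "exp z = 1 + z + exp t / 2 * z\<^sup>2" using t(2) by (simp add: numeral_2_eq_2)
  also have "\<dots> \<le> 1 + z + exp \<bar>z\<bar> / 2 * z\<^sup>2"
    using e by (intro add_left_mono mult_right_mono) auto
  finally show ?thesis by (simp add: field_simps)
qed

lemma sq_exp_bound: fixes x a :: real assumes "a > 0"
  shows "x\<^sup>2 \<le> 4 / (a\<^sup>2 * exp 2) * exp (a * \<bar>x\<bar>)"
proof -
  define y where "y = a * \<bar>x\<bar> / 2"
  have y0: "y \<ge> 0" using assms by (simp add: y_def)
  have "y \<le> exp (y - 1)" using exp_ge_add_one_self[of "y - 1"] by simp
  hence "y\<^sup>2 \<le> (exp (y - 1))\<^sup>2" using y0 by (intro power_mono) auto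
  also have "\<dots> = exp (a * \<bar>x\<bar>) / exp 2"
    by (simp add: y_def power2_eq_square flip: exp_add exp_diff)
  finally have h: "y\<^sup>2 \<le> exp (a * \<bar>x\<bar>) / exp 2" .
  have "x\<^sup>2 = 4 / a\<^sup>2 * y\<^sup>2" using assms by (simp add: y_def power2_eq_square field_simps)
  also have "\<dots> \<le> 4 / a\<^sup>2 * (exp (a * \<bar>x\<bar>) / exp 2)"
    using h assms by (intro mult_left_mono) auto
  finally show ?thesis by simp
qed

lemma exp_ge_w: fixes w :: real assumes "w \<ge> 0" shows "1 + w * exp (w/2) \<le> exp w"
proof -
  define g where "g w = exp w - 1 - w * exp (w/2)" for w :: real
  have d: "(g has_real_derivative (exp (w/2) * (exp (w/2) - 1 - w/2))) (at w)" for w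
    unfolding g_def
    by (auto intro!: derivative_eq_intros simp: field_simps simp flip: exp_add)
  have "g 0 \<le> g w"
  proof (rule DERIV_nonneg_imp_nondecreasing[OF assms])
    fix x assume "0 \<le> x" "x \<le> w"
    show "\<exists>y. (g has_real_derivative y) (at x) \<and> 0 \<le> y"
      using d[of x] exp_ge_add_one_self[of "x/2"] apply (intro exI[of _ "exp (x/2) * (exp (x/2) - 1 - x/2)"]) apply (rule conjI, assumption) apply (rule mult_nonneg_nonneg) apply simp by linarith
  qed
  thus ?thesis by (simp add: g_def)
qed

lemma final_ineq: fixes u :: real assumes "u \<ge> 0"
  shows "1 + 2 * u\<^sup>2 * exp (u\<^sup>2/2 + sqrt 2 * u - 1) \<le> exp (9 * u\<^sup>2 / 4)"
proof -
  have e19: "exp (1/9::real) \<le> 9/8"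
  proof -
    have "8/9 \<le> exp (-(1/9::real))" using exp_ge_add_one_self[of "-(1/9)"] by simp
    hence "8/9 \<le> 1 / exp (1/9::real)" by (simp add: exp_minus field_simps)
    thus ?thesis by (simp add: field_simps)
  qed
  have s2: "sqrt 2 * sqrt 2 = (2::real)" by simp
  have q: "u\<^sup>2/2 + sqrt 2 * u - 1 \<le> 9 * u\<^sup>2 / 8 + 1/9"
  proof -
    have "0 \<le> (5/8) * (u - 4/5 * sqrt 2)\<^sup>2 + (10/9 - 4/5)"
      by simp
    moreover have "(5/8) * (u - 4/5 * sqrt 2)\<^sup>2 + (10/9 - 4/5) = 9 * u\<^sup>2 / 8 + 1/9 - (u\<^sup>2/2 + sqrt 2 * u - 1)"
      by (simp add: power2_eq_square algebra_simps s2)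
    ultimately show ?thesis by linarith
  qed
  have "exp (u\<^sup>2/2 + sqrt 2 * u - 1) \<le> exp (9 * u\<^sup>2 / 8 + 1/9)" using q by simp
  also have "\<dots> = exp (9 * u\<^sup>2 / 8) * exp (1/9)" by (simp add: exp_add)
  also have "\<dots> \<le> exp (9 * u\<^sup>2 / 8) * (9/8)" using e19 by (intro mult_left_mono) auto
  finally have h: "2 * u\<^sup>2 * exp (u\<^sup>2/2 + sqrt 2 * u - 1) \<le> 2 * u\<^sup>2 * (exp (9 * u\<^sup>2 / 8) * (9/8))"
    by (intro mult_left_mono) auto
  have "1 + (9 * u\<^sup>2 / 4) * exp ((9 * u\<^sup>2 / 4) / 2) \<le> exp (9 * u\<^sup>2 / 4)"
    by (rule exp_ge_w) simp
  with h show ?thesis by (simp add: field_simps)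
qed

theorem lemma4:
  fixes M :: "'a measure" and X Y :: "'a \<Rightarrow> real" and \<nu> \<kappa> :: real
  assumes "prob_space M"
    and "X \<in> borel_measurable M" and "Y \<in> borel_measurable M"
    and "uncorrelated M X Y"
    and "\<nu> > 0" and "\<kappa> > 0"
    and "subgaussian M X \<nu>"
    and "AE x in M. \<bar>Y x\<bar> \<le> \<kappa>"
  shows "subgaussian M (\<lambda>x. X x * Y x) ((9/2) * \<kappa>\<^sup>2 * \<nu>)"
proof -
  interpret prob_space M by (rule assms(1))
  note unc = assms(4)[unfolded uncorrelated_def]
  note sg = assms(7)[unfolded subgaussian_def]
  have X0: "(\<integral>x. X x \<partial>M) = 0" using sg by blast
  have Zint: "integrable M (\<lambda>x. X x * Y x)" using unc by blast
  have Z0: "(\<integral>x. X x * Y x \<partial>M) = 0" using unc X0 by simp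
  have Zm: "(\<lambda>x. X x * Y x) \<in> borel_measurable M" using assms(2,3) by measurable
  have mgf: "integrable M (\<lambda>x. exp (c * X x)) \<and> (\<integral>x. exp (c * X x) \<partial>M) \<le> exp (c\<^sup>2 * \<nu> / 2)" for c
  proof -
    have i: "integrable M (\<lambda>x. exp (c * X x))" and l: "ln (\<integral>x. exp (c * X x) \<partial>M) \<le> c\<^sup>2 * \<nu> / 2"
      using sg by auto
    have p: "0 < (\<integral>x. exp (c * X x) \<partial>M)"
    proof -
      have "(\<integral>x. 1 + c * X x \<partial>M) \<le> (\<integral>x. exp (c * X x) \<partial>M)"
        using i sg by (intro integral_mono) auto
      moreover have "(\<integral>x. 1 + c * X x \<partial>M) = 1" using sg X0 by (simp add: prob_space)
      ultimately show ?thesis by linarith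
    qed
    have "(\<integral>x. exp (c * X x) \<partial>M) = exp (ln (\<integral>x. exp (c * X x) \<partial>M))" using p by simp
    also have "\<dots> \<le> exp (c\<^sup>2 * \<nu> / 2)" using l by simp
    finally show ?thesis using i by blast
  qed
  have main: "integrable M (\<lambda>x. exp (l * (X x * Y x))) \<and>
        ln (\<integral>x. exp (l * (X x * Y x)) \<partial>M) \<le> l\<^sup>2 * ((9/2) * \<kappa>\<^sup>2 * \<nu>) / 2" for l
  proof -
    define t where "t = \<bar>l\<bar> * \<kappa>"
    define a where "a = sqrt (2 / \<nu>)"
    define c where "c = t + a"
    define K where "K = l\<^sup>2 * \<kappa>\<^sup>2 / 2 * (2 * \<nu> / exp 2)"
    have t0: "t \<ge> 0" using assms(6) by (simp add: t_def)
    have a0: "a > 0" using assms(5) by (simp add: a_def)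
    have a2: "a\<^sup>2 = 2 / \<nu>" using assms(5) by (simp add: a_def)
    have ic: "integrable M (\<lambda>x. exp (c * X x))" "integrable M (\<lambda>x. exp (- c * X x))"
      using mgf[of c] mgf[of "-c"] by auto
    have iB: "integrable M (\<lambda>x. 1 + l * (X x * Y x) + K * (exp (c * X x) + exp (- c * X x)))"
      using ic Zint by (intro Bochner_Integration.integrable_add integrable_mult_right) auto
    have pt: "exp (l * (X x * Y x)) \<le> 1 + l * (X x * Y x) + K * (exp (c * X x) + exp (- c * X x))"
      if Yb: "\<bar>Y x\<bar> \<le> \<kappa>" for x
    proof -
      have ab: "\<bar>l * (X x * Y x)\<bar> \<le> t * \<bar>X x\<bar>"
      proof -
        have "\<bar>l\<bar> * \<bar>X x\<bar> * \<bar>Y x\<bar> \<le> \<bar>l\<bar> * \<bar>X x\<bar> * \<kappa>" using Yb by (intro mult_left_mono) auto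
        thus ?thesis by (simp add: t_def abs_mult algebra_simps)
      qed
      have sq: "(l * (X x * Y x))\<^sup>2 \<le> l\<^sup>2 * \<kappa>\<^sup>2 * (X x)\<^sup>2"
      proof -
        have "(Y x)\<^sup>2 \<le> \<kappa>\<^sup>2" using Yb by (metis abs_le_square_iff abs_of_pos assms(6))
        hence "l\<^sup>2 * (X x)\<^sup>2 * (Y x)\<^sup>2 \<le> l\<^sup>2 * (X x)\<^sup>2 * \<kappa>\<^sup>2" by (intro mult_left_mono) auto
        thus ?thesis by (simp add: power_mult_distrib algebra_simps)
      qed
      have "exp (l * (X x * Y x)) \<le> 1 + l * (X x * Y x) + (l * (X x * Y x))\<^sup>2 / 2 * exp \<bar>l * (X x * Y x)\<bar>"
        by (rule exp_taylor2)
      also have "(l * (X x * Y x))\<^sup>2 / 2 * exp \<bar>l * (X x * Y x)\<bar> \<le> l\<^sup>2 * \<kappa>\<^sup>2 / 2 * ((X x)\<^sup>2 * exp (t * \<bar>X x\<bar>))"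
      proof -
        have "(l * (X x * Y x))\<^sup>2 / 2 * exp \<bar>l * (X x * Y x)\<bar> \<le> (l\<^sup>2 * \<kappa>\<^sup>2 * (X x)\<^sup>2) / 2 * exp (t * \<bar>X x\<bar>)"
          using sq ab by (intro mult_mono divide_right_mono) auto
        thus ?thesis by (simp add: field_simps)
      qed
      also have "(X x)\<^sup>2 * exp (t * \<bar>X x\<bar>) \<le> (2 * \<nu> / exp 2) * (exp (c * X x) + exp (- c * X x))"
      proof -
        have "(X x)\<^sup>2 * exp (t * \<bar>X x\<bar>) \<le> 4 / (a\<^sup>2 * exp 2) * exp (a * \<bar>X x\<bar>) * exp (t * \<bar>X x\<bar>)"
          using sq_exp_bound[OF a0, of "X x"] by (intro mult_right_mono) auto
        also have "\<dots> = (2 * \<nu> / exp 2) * exp (c * \<bar>X x\<bar>)"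
          using assms(5) by (simp add: a2 c_def distrib_right exp_add field_simps)
        also have "\<dots> \<le> (2 * \<nu> / exp 2) * (exp (c * X x) + exp (- c * X x))"
          using assms(5) by (intro mult_left_mono) (cases "X x \<ge> 0", auto)
        finally show ?thesis .
      qed
      finally show ?thesis
        by (simp add: K_def mult_left_mono mult.assoc)
    qed
    have ae: "AE x in M. norm (exp (l * (X x * Y x))) \<le> norm (1 + l * (X x * Y x) + K * (exp (c * X x) + exp (- c * X x)))"
      using assms(8)
    proof eventually_elim
      case (elim x)
      have "exp (l * (X x * Y x)) \<le> 1 + l * (X x * Y x) + K * (exp (c * X x) + exp (- c * X x))"
        using pt[OF elim] .
      thus ?case by simp
    qed
    have iE: "integrable M (\<lambda>x. exp (l * (X x * Y x)))"
      using assms(2,3) by (intro Bochner_Integration.integrable_bound[OF iB _ ae]) measurable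
    have "(\<integral>x. exp (l * (X x * Y x)) \<partial>M) \<le> (\<integral>x. 1 + l * (X x * Y x) + K * (exp (c * X x) + exp (- c * X x)) \<partial>M)"
      using assms(8) iE iB pt by (intro integral_mono_AE) (auto elim!: eventually_mono)
    also have "\<dots> = 1 + l * 0 + K * ((\<integral>x. exp (c * X x) \<partial>M) + (\<integral>x. exp (- c * X x) \<partial>M))"
      using ic Zint Z0 by (simp add: integral_add integral_mult_right prob_space)
    also have "\<dots> \<le> 1 + K * (2 * exp (c\<^sup>2 * \<nu> / 2))"
    proof -
      have K0: "K \<ge> 0" using assms(5) by (simp add: K_def)
      have "(\<integral>x. exp (c * X x) \<partial>M) + (\<integral>x. exp (- c * X x) \<partial>M) \<le> 2 * exp (c\<^sup>2 * \<nu> / 2)"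
        using mgf[of c] mgf[of "-c"] by simp
      thus ?thesis using K0 by (simp add: mult_left_mono)
    qed
    also have "\<dots> = 1 + 2 * (t * sqrt \<nu>)\<^sup>2 * exp ((t * sqrt \<nu>)\<^sup>2/2 + sqrt 2 * (t * sqrt \<nu>) - 1)"
    proof -
      have as: "a * sqrt \<nu> = sqrt 2" using assms(5) by (simp add: a_def real_sqrt_divide)
      have e: "c\<^sup>2 * \<nu> / 2 = (t * sqrt \<nu>)\<^sup>2/2 + sqrt 2 * (t * sqrt \<nu>) - 1 + 2"
      proof -
        have "c\<^sup>2 * \<nu> = (t * sqrt \<nu> + a * sqrt \<nu>)\<^sup>2" using assms(5)
          by (simp add: c_def power2_eq_square algebra_simps)
        also have "\<dots> = (t * sqrt \<nu>)\<^sup>2 + 2 * sqrt 2 * (t * sqrt \<nu>) + 2"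
          by (simp add: as power2_eq_square algebra_simps)
        finally show ?thesis by simp
      qed
      have "K * (2 * exp (c\<^sup>2 * \<nu> / 2)) = 2 * (t * sqrt \<nu>)\<^sup>2 * exp ((t * sqrt \<nu>)\<^sup>2/2 + sqrt 2 * (t * sqrt \<nu>) - 1)"
        unfolding e exp_add K_def t_def using assms(5) by (simp add: power2_eq_square field_simps)
      thus ?thesis by simp
    qed
    also have "\<dots> \<le> exp (9 * (t * sqrt \<nu>)\<^sup>2 / 4)"
      using t0 assms(5) by (intro final_ineq) auto
    also have "\<dots> = exp (l\<^sup>2 * ((9/2) * \<kappa>\<^sup>2 * \<nu>) / 2)"
      using assms(5) by (simp add: t_def power_mult_distrib)
    finally have le: "(\<integral>x. exp (l * (X x * Y x)) \<partial>M) \<le> exp (l\<^sup>2 * ((9/2) * \<kappa>\<^sup>2 * \<nu>) / 2)" .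
    have p: "0 < (\<integral>x. exp (l * (X x * Y x)) \<partial>M)"
    proof -
      have "(\<integral>x. 1 + l * (X x * Y x) \<partial>M) \<le> (\<integral>x. exp (l * (X x * Y x)) \<partial>M)"
        using iE Zint by (intro integral_mono) auto
      moreover have "(\<integral>x. 1 + l * (X x * Y x) \<partial>M) = 1" using Zint Z0 by (simp add: prob_space)
      ultimately show ?thesis by linarith
    qed
    have "ln (\<integral>x. exp (l * (X x * Y x)) \<partial>M) \<le> ln (exp (l\<^sup>2 * ((9/2) * \<kappa>\<^sup>2 * \<nu>) / 2))"
      using le p by (subst ln_le_cancel_iff) auto
    thus ?thesis using iE by simp
  qed
  show ?thesis unfolding subgaussian_def using Zm Zint Z0 main by blast
qed

end
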